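(* Let $X$ be a finite set with $|X|=n$ and let $\mathfrak{G}=\mathbf{G}_2(X)$ be the generalized Desargues configuration, with point set $\mathcal{P}_2(X)$ and lines the sets $\mathcal{P}_2(Z)$ for $3$-subsets $Z$ of $X$. For $H\subseteq\mathcal{P}_2(X)$ the following are equivalent: (a) $H$ is a hyperplane of $\mathfrak{G}$; (b) there is a nonempty proper subset $Z$ of $X$ such that $H=\mathcal{P}_2(Z)\cup\mathcal{P}_2(X\setminus Z)$. Consequently, the Veldkamp space of $\mathbf{G}_2(X)$ is the projective space $PG(n-2,2)$.
   Context: $\mathcal{P}_2(Y)$ is the set of $2$-subsets of $Y$. A subspace is a set of points containing every line meeting it in at least two points; a hyperplane is a proper subspace meeting every line. For distinct hyperplanes $H_1,H_2$ of a partial Steiner triple system with point set $S$, $H_1\pitchfork H_2:=S\setminus(H_1\triangle H_2)$; the Veldkamp space of the system is the incidence structure whose points are its hyperplanes and whose lines are the triples $\{H_1,H_2,H_1\pitchfork H_2\}$ for distinct hyperplanes $H_1,H_2$. $PG(d,2)$ denotes the $d$-dimensional projective space over the two-element field. *)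

theory Defs
  imports Main
begin

definition subspace :: "'p set \<Rightarrow> 'p set set \<Rightarrow> 'p set \<Rightarrow> bool" where
  "subspace S L A \<longleftrightarrow> A \<subseteq> S \<and> (\<forall>l\<in>L. 2 \<le> card (l \<inter> A) \<longrightarrow> l \<subseteq> A)"

definition hyperplane :: "'p set \<Rightarrow> 'p set set \<Rightarrow> 'p set \<Rightarrow> bool" where
  "hyperplane S L H \<longleftrightarrow> subspace S L H \<and> H \<noteq> S \<and> (\<forall>l\<in>L. l \<inter> H \<noteq> {})"

definition pitchfork :: "'p set \<Rightarrow> 'p set \<Rightarrow> 'p set \<Rightarrow> 'p set" where
  "pitchfork S H1 H2 = S - ((H1 - H2) \<union> (H2 - H1))"

definition veldkamp_points :: "'p set \<Rightarrow> 'p set set \<Rightarrow> 'p set set" where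
  "veldkamp_points S L = {H. hyperplane S L H}"

definition veldkamp_lines :: "'p set \<Rightarrow> 'p set set \<Rightarrow> 'p set set set" where
  "veldkamp_lines S L = {{H1, H2, pitchfork S H1 H2} | H1 H2.
      hyperplane S L H1 \<and> hyperplane S L H2 \<and> H1 \<noteq> H2}"

definition P2 :: "'a set \<Rightarrow> 'a set set" where
  "P2 Y = {A. A \<subseteq> Y \<and> card A = 2}"

definition desargues_points :: "'a set \<Rightarrow> 'a set set" where
  "desargues_points X = P2 X"

definition desargues_lines :: "'a set \<Rightarrow> 'a set set set" where
  "desargues_lines X = {P2 Z | Z. Z \<subseteq> X \<and> card Z = 3}"

text \<open>PG(d,2): vectors of GF(2)^(d+1) are modelled as subsets of {0..d}
  (characteristic sets), vector addition is symmetric difference; points are the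
  nonzero vectors and lines are the triples {u, v, u+v} for distinct points u, v.\<close>
definition pg_points :: "nat \<Rightarrow> nat set set" where
  "pg_points d = {A. A \<subseteq> {0..d} \<and> A \<noteq> {}}"

definition pg_lines :: "nat \<Rightarrow> nat set set set" where
  "pg_lines d = {{A, B, (A - B) \<union> (B - A)} | A B.
      A \<in> pg_points d \<and> B \<in> pg_points d \<and> A \<noteq> B}"

definition isomorphic_incidence ::
  "'p set \<Rightarrow> 'p set set \<Rightarrow> 'q set \<Rightarrow> 'q set set \<Rightarrow> bool" where
  "isomorphic_incidence P1 L1 P2' L2 \<longleftrightarrow>
     (\<exists>f. bij_betw f P1 P2' \<and> (\<lambda>l. f ` l) ` L1 = L2)"

end

theory Submission
  imports Defs
begin

definition hp :: "'a set \<Rightarrow> 'a set \<Rightarrow> 'a set set" where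
  "hp X W = P2 W \<union> P2 (X - W)"

lemma P2_mem: "A \<in> P2 Y \<longleftrightarrow> (\<exists>x y. x \<noteq> y \<and> x \<in> Y \<and> y \<in> Y \<and> A = {x,y})"
  unfolding P2_def by (auto simp: card_2_iff)

lemma pair_in_P2: "{x,y} \<in> P2 Y \<longleftrightarrow> x \<noteq> y \<and> x \<in> Y \<and> y \<in> Y"
  unfolding P2_def by (auto simp: card_insert_if)

lemma hp_mem: "W \<subseteq> X \<Longrightarrow> x \<in> X \<Longrightarrow> y \<in> X \<Longrightarrow> x \<noteq> y \<Longrightarrow>
   {x,y} \<in> hp X W \<longleftrightarrow> (x \<in> W \<longleftrightarrow> y \<in> W)"
  unfolding hp_def pair_in_P2 Un_iff by blast

lemma hp_sub: "W \<subseteq> X \<Longrightarrow> hp X W \<subseteq> P2 X"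
  unfolding hp_def P2_def by auto

lemma pairs_eq:
  assumes "A \<subseteq> P2 X" "B \<subseteq> P2 X"
    and "\<And>x y. x\<in>X \<Longrightarrow> y\<in>X \<Longrightarrow> x\<noteq>y \<Longrightarrow> {x,y}\<in>A \<longleftrightarrow> {x,y}\<in>B"
  shows "A = B"
proof (rule set_eqI)
  fix a show "a \<in> A \<longleftrightarrow> a \<in> B"
  proof
    assume "a \<in> A"
    then have "a \<in> P2 X" using assms(1) by blast
    then obtain x y where "x\<noteq>y" "x\<in>X" "y\<in>X" "a={x,y}" unfolding P2_mem by blast
    then show "a \<in> B" using assms(3) \<open>a\<in>A\<close> by blast
  next
    assume "a \<in> B"
    then have "a \<in> P2 X" using assms(2) by blast
    then obtain x y where "x\<noteq>y" "x\<in>X" "y\<in>X" "a={x,y}" unfolding P2_mem by blast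
    then show "a \<in> A" using assms(3) \<open>a\<in>B\<close> by blast
  qed
qed

lemma P2_three: "a \<noteq> b \<Longrightarrow> a \<noteq> c \<Longrightarrow> b \<noteq> c \<Longrightarrow> P2 {a,b,c} = {{a,b},{a,c},{b,c}}"
proof (rule set_eqI)
  fix A assume d: "a \<noteq> b" "a \<noteq> c" "b \<noteq> c"
  have c1: "{b,a} = {a,b}" "{c,a} = {a,c}" "{c,b} = {b,c}" by auto
  show "A \<in> P2 {a,b,c} \<longleftrightarrow> A \<in> {{a,b},{a,c},{b,c}}"
    unfolding P2_mem using d c1 by blast
qed
lemma line_mem: "l \<in> desargues_lines X \<longleftrightarrow>
   (\<exists>a b c. a\<in>X \<and> b\<in>X \<and> c\<in>X \<and> a\<noteq>b \<and> a\<noteq>c \<and> b\<noteq>c \<and> l = {{a,b},{a,c},{b,c}})"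
proof
  assume "l \<in> desargues_lines X"
  then obtain Z where Z: "Z \<subseteq> X" "card Z = 3" "l = P2 Z" unfolding desargues_lines_def by blast
  then obtain x y z where xyz: "Z = {x,y,z}" "x\<noteq>y" "y\<noteq>z" "x\<noteq>z" unfolding card_3_iff by blast
  have "x\<in>X" "y\<in>X" "z\<in>X" using xyz(1) Z(1) by auto
  moreover have "l = {{x,y},{x,z},{y,z}}" using P2_three[of x y z] xyz Z(3) by simp
  ultimately show "\<exists>a b c. a\<in>X \<and> b\<in>X \<and> c\<in>X \<and> a\<noteq>b \<and> a\<noteq>c \<and> b\<noteq>c \<and> l = {{a,b},{a,c},{b,c}}"
    using xyz by blast
next
  assume "\<exists>a b c. a\<in>X \<and> b\<in>X \<and> c\<in>X \<and> a\<noteq>b \<and> a\<noteq>c \<and> b\<noteq>c \<and> l = {{a,b},{a,c},{b,c}}"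
  then obtain a b c where h: "a\<in>X" "b\<in>X" "c\<in>X" "a\<noteq>b" "a\<noteq>c" "b\<noteq>c" "l = {{a,b},{a,c},{b,c}}"
    by blast
  have "l = P2 {a,b,c}" using P2_three[OF h(4-6)] h(7) by simp
  moreover have "{a,b,c} \<subseteq> X" using h by simp
  moreover have "card {a,b,c} = 3" using h by simp
  ultimately show "l \<in> desargues_lines X" unfolding desargues_lines_def by blast
qed

lemma line_intro: "a\<in>X \<Longrightarrow> b\<in>X \<Longrightarrow> c\<in>X \<Longrightarrow> a\<noteq>b \<Longrightarrow> a\<noteq>c \<Longrightarrow> b\<noteq>c \<Longrightarrow>
  {{a,b},{a,c},{b,c}} \<in> desargues_lines X"
  unfolding line_mem by (intro exI[of _ a] exI[of _ b] exI[of _ c]) simp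

lemma card_two: "p \<noteq> q \<Longrightarrow> card {p,q} = 2" by simp

lemma two_elems: "2 \<le> card A \<Longrightarrow> \<exists>p q. p\<in>A \<and> q\<in>A \<and> p\<noteq>q"
proof (rule ccontr)
  assume a: "2 \<le> card A" "\<not> (\<exists>p q. p\<in>A \<and> q\<in>A \<and> p\<noteq>q)"
  then have "finite A" using card.infinite by force
  then have "card A \<le> Suc 0" using a(2) card_le_Suc0_iff_eq by blast
  then show False using a(1) by simp
qed


lemma hyp_forward:
  assumes hyp: "hyperplane (desargues_points X) (desargues_lines X) H"
  shows "\<exists>Z. Z \<noteq> {} \<and> Z \<subset> X \<and> H = hp X Z"
proof -
  let ?S = "desargues_points X" and ?L = "desargues_lines X"
  have HS: "H \<subseteq> P2 X" and sub: "\<forall>l\<in>?L. 2 \<le> card (l \<inter> H) \<longrightarrow> l \<subseteq> H"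
    and ne: "H \<noteq> P2 X" and meet: "\<forall>l\<in>?L. l \<inter> H \<noteq> {}"
    using hyp unfolding hyperplane_def subspace_def desargues_points_def by blast+
  define R where "R x y \<longleftrightarrow> {x,y} \<in> H" for x y
  have Rsym: "R x y \<longleftrightarrow> R y x" for x y unfolding R_def by (metis insert_commute)
  have trans: "R a c" if "a\<in>X" "b\<in>X" "c\<in>X" "a\<noteq>b" "a\<noteq>c" "b\<noteq>c" "R a b" "R b c" for a b c
  proof -
    let ?l = "{{a,b},{a,c},{b,c}}"
    have l: "?l \<in> ?L" using that by (intro line_intro)
    have d: "{a,b} \<noteq> {b,c}" using that by (metis insertI1 insert_commute doubleton_eq_iff)
    have "finite (?l \<inter> H)" by simp
    moreover have "{{a,b},{b,c}} \<subseteq> ?l \<inter> H" using that unfolding R_def by auto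
    ultimately have "card {{a,b},{b,c}} \<le> card (?l \<inter> H)" by (rule card_mono)
    then have "2 \<le> card (?l \<inter> H)" using card_two[OF d] by simp
    then have "?l \<subseteq> H" using sub l by blast
    then show ?thesis unfolding R_def by auto
  qed
  have mt: "R a b \<or> R a c \<or> R b c" if "a\<in>X" "b\<in>X" "c\<in>X" "a\<noteq>b" "a\<noteq>c" "b\<noteq>c" for a b c
  proof -
    let ?l = "{{a,b},{a,c},{b,c}}"
    have l: "?l \<in> ?L" using that by (intro line_intro)
    have "?l \<inter> H \<noteq> {}" using bspec[OF meet l] .
    then obtain p where "p \<in> ?l" "p \<in> H" by blast
    then show ?thesis unfolding R_def by auto
  qed
  obtain A where "A \<in> P2 X" "A \<notin> H" using HS ne by blast
  then obtain x0 y0 where x0: "x0 \<noteq> y0" "x0 \<in> X" "y0 \<in> X" "\<not> R x0 y0"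
    unfolding R_def P2_mem by blast
  define Z where "Z = {x\<in>X. x = x0 \<or> R x0 x}"
  have ZX: "Z \<subseteq> X" unfolding Z_def by auto
  have "x0 \<in> Z" using x0 unfolding Z_def by auto
  moreover have "y0 \<notin> Z" using x0 unfolding Z_def by auto
  moreover have "H = hp X Z"
  proof (rule pairs_eq[OF HS hp_sub[OF ZX]])
    fix x y assume xy: "x\<in>X" "y\<in>X" "x\<noteq>y"
    have "R x y \<longleftrightarrow> (x \<in> Z \<longleftrightarrow> y \<in> Z)"
    proof -
      have zmem: "w \<in> Z \<longleftrightarrow> w\<in>X \<and> (w = x0 \<or> R x0 w)" for w by (simp add: Z_def)
      show ?thesis
      proof (cases "x = x0")
        case True then show ?thesis using zmem[of x0] zmem[of y] xy by blast
      next
        case xn: False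
        show ?thesis
        proof (cases "y = x0")
          case True then show ?thesis using zmem[of x0] zmem[of x] xy Rsym[of x x0] by blast
        next
          case yn: False
          have zx: "x \<in> Z \<longleftrightarrow> R x0 x" and zy: "y \<in> Z \<longleftrightarrow> R x0 y"
            using zmem[of x] zmem[of y] xy xn yn by blast+
          have t1: "R x0 x \<Longrightarrow> R x0 y \<Longrightarrow> R x y"
            using trans[of x x0 y] xy xn yn x0(2) Rsym[of x x0] by blast
          have t2: "R x0 x \<Longrightarrow> R x y \<Longrightarrow> R x0 y"
            using trans[of x0 x y] xy xn yn x0(2) by blast
          have t3: "R x0 y \<Longrightarrow> R x y \<Longrightarrow> R x0 x"
            using trans[of x0 y x] xy xn yn x0(2) Rsym[of x y] by blast
          have t4: "R x0 x \<or> R x0 y \<or> R x y"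
            using mt[of x0 x y] xy xn yn x0(2) by blast
          show ?thesis unfolding zx zy using t1 t2 t3 t4 by blast
        qed
      qed
    qed
    then have "{x,y} \<in> H \<longleftrightarrow> (x\<in>Z \<longleftrightarrow> y\<in>Z)" by (simp only: R_def)
    then show "{x,y} \<in> H \<longleftrightarrow> {x,y} \<in> hp X Z" using hp_mem[OF ZX xy] by blast
  qed
  ultimately have "Z \<noteq> {}" "Z \<subset> X" "H = hp X Z" using ZX x0(3) by blast+
  then show ?thesis by (intro exI[of _ Z]) simp
qed

lemma hyp_backward:
  assumes "Z \<noteq> {}" "Z \<subset> X"
  shows "hyperplane (desargues_points X) (desargues_lines X) (hp X Z)"
proof -
  have ZX: "Z \<subseteq> X" using assms by auto
  let ?H = "hp X Z"
  have lines: "({a,b} \<in> ?H \<longleftrightarrow> (a\<in>Z \<longleftrightarrow> b\<in>Z)) \<and> ({a,c} \<in> ?H \<longleftrightarrow> (a\<in>Z \<longleftrightarrow> c\<in>Z))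
        \<and> ({b,c} \<in> ?H \<longleftrightarrow> (b\<in>Z \<longleftrightarrow> c\<in>Z))"
    if "a\<in>X" "b\<in>X" "c\<in>X" "a\<noteq>b" "a\<noteq>c" "b\<noteq>c" for a b c
    using hp_mem[OF ZX, of a b] hp_mem[OF ZX, of a c] hp_mem[OF ZX, of b c] that by simp
  have subsp: "subspace (desargues_points X) (desargues_lines X) ?H"
    unfolding subspace_def desargues_points_def
  proof (intro conjI ballI impI)
    show "?H \<subseteq> P2 X" by (rule hp_sub[OF ZX])
  next
    fix l assume l: "l \<in> desargues_lines X" and c: "2 \<le> card (l \<inter> ?H)"
    obtain a b c where abc: "a\<in>X" "b\<in>X" "c\<in>X" "a\<noteq>b" "a\<noteq>c" "b\<noteq>c" "l = {{a,b},{a,c},{b,c}}"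
      using l unfolding line_mem by blast
    obtain p q where pq: "p \<in> l \<inter> ?H" "q \<in> l \<inter> ?H" "p \<noteq> q" using two_elems[OF c] by blast
    have P: "p = {a,b} \<or> p = {a,c} \<or> p = {b,c}" using pq(1) abc(7) by blast
    have Q: "q = {a,b} \<or> q = {a,c} \<or> q = {b,c}" using pq(2) abc(7) by blast
    have two: "({a,b}\<in>?H \<and> {a,c}\<in>?H) \<or> ({a,b}\<in>?H \<and> {b,c}\<in>?H) \<or> ({a,c}\<in>?H \<and> {b,c}\<in>?H)"
      using P Q pq by auto
    have e: "{a,b} \<in> ?H \<longleftrightarrow> (a\<in>Z \<longleftrightarrow> b\<in>Z)" "{a,c} \<in> ?H \<longleftrightarrow> (a\<in>Z \<longleftrightarrow> c\<in>Z)"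
       "{b,c} \<in> ?H \<longleftrightarrow> (b\<in>Z \<longleftrightarrow> c\<in>Z)" using lines[OF abc(1-6)] by simp_all
    have "{a,b}\<in>?H \<and> {a,c}\<in>?H \<and> {b,c}\<in>?H" using two unfolding e
      by (cases "a\<in>Z"; cases "b\<in>Z"; cases "c\<in>Z") simp_all
    then show "l \<subseteq> ?H" using abc(7) by simp
  qed
  obtain z where z: "z \<in> Z" using assms by blast
  obtain w where w: "w \<in> X" "w \<notin> Z" using assms by blast
  have zw: "z \<noteq> w" "z \<in> X" using z w ZX by auto
  have "{z,w} \<in> P2 X" using zw w by (simp add: pair_in_P2)
  moreover have "{z,w} \<notin> ?H" using hp_mem[OF ZX zw(2) w(1) zw(1)] z w by simp
  ultimately
  have "?H \<noteq> desargues_points X" unfolding desargues_points_def by blast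
  moreover have "\<forall>l\<in>desargues_lines X. l \<inter> ?H \<noteq> {}"
  proof
    fix l assume l: "l \<in> desargues_lines X"
    obtain a b c where abc: "a\<in>X" "b\<in>X" "c\<in>X" "a\<noteq>b" "a\<noteq>c" "b\<noteq>c" "l = {{a,b},{a,c},{b,c}}"
      using l unfolding line_mem by blast
    have e: "{a,b} \<in> ?H \<longleftrightarrow> (a\<in>Z \<longleftrightarrow> b\<in>Z)" "{a,c} \<in> ?H \<longleftrightarrow> (a\<in>Z \<longleftrightarrow> c\<in>Z)"
       "{b,c} \<in> ?H \<longleftrightarrow> (b\<in>Z \<longleftrightarrow> c\<in>Z)" using lines[OF abc(1-6)] by simp_all
    have "{a,b}\<in>?H \<or> {a,c}\<in>?H \<or> {b,c}\<in>?H" unfolding e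
      by (cases "a\<in>Z"; cases "b\<in>Z"; cases "c\<in>Z") simp_all
    then show "l \<inter> ?H \<noteq> {}" using abc(7) by blast
  qed
  ultimately show ?thesis using subsp unfolding hyperplane_def by blast
qed

lemma hp_compl: "Z \<subseteq> X \<Longrightarrow> hp X (X - Z) = hp X Z"
proof -
  assume "Z \<subseteq> X"
  then have "X - (X - Z) = Z" by blast
  then show ?thesis unfolding hp_def by (simp add: Un_commute)
qed

lemma hp_pitch:
  assumes W1: "W1 \<subseteq> X" and W2: "W2 \<subseteq> X"
  shows "pitchfork (P2 X) (hp X W1) (hp X W2) = hp X ((W1 - W2) \<union> (W2 - W1))"
proof (rule pairs_eq)
  show "pitchfork (P2 X) (hp X W1) (hp X W2) \<subseteq> P2 X" unfolding pitchfork_def by blast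
  have W: "(W1 - W2) \<union> (W2 - W1) \<subseteq> X" using W1 W2 by blast
  show "hp X ((W1 - W2) \<union> (W2 - W1)) \<subseteq> P2 X" by (rule hp_sub[OF W])
  fix x y assume xy: "x\<in>X" "y\<in>X" "x\<noteq>y"
  have "{x,y} \<in> P2 X" using xy by (simp add: pair_in_P2)
  then have "{x,y} \<in> pitchfork (P2 X) (hp X W1) (hp X W2) \<longleftrightarrow>
      ({x,y} \<in> hp X W1 \<longleftrightarrow> {x,y} \<in> hp X W2)" unfolding pitchfork_def by blast
  also have "\<dots> \<longleftrightarrow> ((x\<in>W1 \<longleftrightarrow> y\<in>W1) \<longleftrightarrow> (x\<in>W2 \<longleftrightarrow> y\<in>W2))"
    using hp_mem[OF W1 xy] hp_mem[OF W2 xy] by simp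
  also have "\<dots> \<longleftrightarrow> (x \<in> (W1 - W2) \<union> (W2 - W1) \<longleftrightarrow> y \<in> (W1 - W2) \<union> (W2 - W1))"
    by (cases "x\<in>W1"; cases "y\<in>W1"; cases "x\<in>W2"; cases "y\<in>W2") simp_all
  also have "\<dots> \<longleftrightarrow> {x,y} \<in> hp X ((W1 - W2) \<union> (W2 - W1))"
    using hp_mem[OF W xy] by simp
  finally show "{x,y} \<in> pitchfork (P2 X) (hp X W1) (hp X W2) \<longleftrightarrow>
      {x,y} \<in> hp X ((W1 - W2) \<union> (W2 - W1))" .
qed

lemma psi_hp:
  assumes "x0 \<in> X" "W \<subseteq> X - {x0}"
  shows "{x \<in> X - {x0}. {x0,x} \<notin> hp X W} = W"
proof (rule set_eqI)
  fix x
  have WX: "W \<subseteq> X" using assms by blast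
  show "x \<in> {x \<in> X - {x0}. {x0,x} \<notin> hp X W} \<longleftrightarrow> x \<in> W"
  proof (cases "x \<in> X - {x0}")
    case True
    then have "{x0,x} \<in> hp X W \<longleftrightarrow> (x0 \<in> W \<longleftrightarrow> x \<in> W)" using hp_mem[OF WX, of x0 x] assms by auto
    moreover have "x0 \<notin> W" using assms by blast
    ultimately show ?thesis using True by simp
  next
    case False then show ?thesis using assms by blast
  qed
qed

lemma hyp_W:
  assumes "x0 \<in> X" "hyperplane (desargues_points X) (desargues_lines X) H"
  shows "\<exists>W. W \<subseteq> X - {x0} \<and> W \<noteq> {} \<and> H = hp X W"
proof -
  obtain Z where Z: "Z \<noteq> {}" "Z \<subset> X" "H = hp X Z" using hyp_forward[OF assms(2)] by blast
  show ?thesis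
  proof (cases "x0 \<in> Z")
    case True
    have "X - Z \<subseteq> X - {x0}" "X - Z \<noteq> {}" "H = hp X (X - Z)"
      using True Z hp_compl[of Z X] by auto
    then show ?thesis by blast
  next
    case False
    then have "Z \<subseteq> X - {x0}" using Z by blast
    then show ?thesis using Z by blast
  qed
qed

lemma W_hyp:
  assumes "x0 \<in> X" "W \<subseteq> X - {x0}" "W \<noteq> {}"
  shows "hyperplane (desargues_points X) (desargues_lines X) (hp X W)"
proof -
  have "W \<subset> X" using assms by blast
  then show ?thesis using hyp_backward[OF assms(3)] by blast
qed

theorem theorem4p1:
  fixes X :: "'a set"
  assumes "finite X"
  shows "(\<forall>H. H \<subseteq> P2 X \<longrightarrow>
            (hyperplane (desargues_points X) (desargues_lines X) H \<longleftrightarrow>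
             (\<exists>Z. Z \<noteq> {} \<and> Z \<subset> X \<and> H = P2 Z \<union> P2 (X - Z))))
       \<and> (2 \<le> card X \<longrightarrow>
            isomorphic_incidence
              (veldkamp_points (desargues_points X) (desargues_lines X))
              (veldkamp_lines (desargues_points X) (desargues_lines X))
              (pg_points (card X - 2)) (pg_lines (card X - 2)))"
proof (intro conjI allI impI)
  fix H :: "'a set set"
  show "hyperplane (desargues_points X) (desargues_lines X) H \<longleftrightarrow>
             (\<exists>Z. Z \<noteq> {} \<and> Z \<subset> X \<and> H = P2 Z \<union> P2 (X - Z))"
    using hyp_forward[of X H] hyp_backward[of _ X] unfolding hp_def by blast
next
  assume n2: "2 \<le> card X"
  let ?S = "desargues_points X" and ?L = "desargues_lines X"
  define n where "n = card X"
  obtain x0 where x0: "x0 \<in> X" using n2 by fastforce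
  define X' where "X' = X - {x0}"
  have fX': "finite X'" using assms unfolding X'_def by simp
  have cX': "card X' = n - 2 + 1" using x0 assms n2 unfolding X'_def n_def by simp
  obtain g where g: "bij_betw g X' {0..<card X'}" using ex_bij_betw_finite_nat[OF fX'] by blast
  have D: "{0..<card X'} = {0..n-2}" using cX' by auto
  have gim: "g ` X' = {0..n-2}" and ginj: "inj_on g X'" using g D unfolding bij_betw_def by auto
  define f where "f H = g ` {x \<in> X'. {x0,x} \<notin> H}" for H
  have fhp: "f (hp X W) = g ` W" if "W \<subseteq> X'" for W
    unfolding f_def X'_def using psi_hp[OF x0] that X'_def by simp
  have hW: "\<exists>W. W \<subseteq> X' \<and> W \<noteq> {} \<and> H = hp X W" if "hyperplane ?S ?L H" for H
    using hyp_W[OF x0 that] unfolding X'_def .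
  have Wh: "hyperplane ?S ?L (hp X W)" if "W \<subseteq> X'" "W \<noteq> {}" for W
    using W_hyp[OF x0] that unfolding X'_def by blast
  let ?VP = "veldkamp_points ?S ?L" and ?VL = "veldkamp_lines ?S ?L"
  let ?PP = "pg_points (card X - 2)" and ?PL = "pg_lines (card X - 2)"
  have VP: "H \<in> ?VP \<longleftrightarrow> hyperplane ?S ?L H" for H unfolding veldkamp_points_def by simp
  have hV: "\<exists>W. W \<subseteq> X' \<and> W \<noteq> {} \<and> H = hp X W" if "H \<in> ?VP" for H
  proof -
    have "hyperplane ?S ?L H" using that unfolding veldkamp_points_def by simp
    then show ?thesis by (rule hW)
  qed
  have fin: "f H \<in> ?PP" if hH: "H \<in> ?VP" for H
  proof -
    obtain W where W: "W \<subseteq> X'" "W \<noteq> {}" "H = hp X W" using hV[OF hH] by blast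
    have e: "f H = g ` W" using fhp[OF W(1)] W(3) by simp
    have "g ` W \<subseteq> g ` X'" using W(1) by (rule image_mono)
    then have "g ` W \<subseteq> {0..card X - 2}" using gim n_def by simp
    moreover have "g ` W \<noteq> {}" using W(2) by simp
    ultimately show ?thesis unfolding e pg_points_def by simp
  qed
  have finj: "inj_on f ?VP"
  proof (rule inj_onI)
    fix H1 H2 assume H: "H1 \<in> ?VP" "H2 \<in> ?VP" "f H1 = f H2"
    obtain W1 where W1: "W1 \<subseteq> X'" "W1 \<noteq> {}" "H1 = hp X W1" using hV[OF H(1)] by blast
    obtain W2 where W2: "W2 \<subseteq> X'" "W2 \<noteq> {}" "H2 = hp X W2" using hV[OF H(2)] by blast
    have "g ` W1 = g ` W2" using H(3) W1(3) W2(3) fhp[OF W1(1)] fhp[OF W2(1)] by simp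
    then have "W1 = W2" using inj_on_image_eq_iff[OF ginj W1(1) W2(1)] by simp
    then show "H1 = H2" using W1(3) W2(3) by simp
  qed
  have fsurj: "\<exists>H \<in> ?VP. f H = A" if "A \<in> ?PP" for A
  proof -
    have A: "A \<subseteq> {0..n-2}" "A \<noteq> {}" using that n_def unfolding pg_points_def by auto
    define W where "W = {x \<in> X'. g x \<in> A}"
    have gW: "g ` W = A"
    proof
      show "g ` W \<subseteq> A" unfolding W_def by blast
      show "A \<subseteq> g ` W"
      proof
        fix a assume a: "a \<in> A"
        then have "a \<in> g ` X'" using A(1) gim by blast
        then obtain x where "x \<in> X'" "a = g x" by blast
        then show "a \<in> g ` W" using a unfolding W_def by blast
      qed
    qed
    have W1: "W \<subseteq> X'" unfolding W_def by blast
    have W2: "W \<noteq> {}" using gW A(2) by blast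
    have "hp X W \<in> ?VP" using Wh[OF W1 W2] unfolding veldkamp_points_def by simp
    moreover have "f (hp X W) = A" using fhp[OF W1] gW by simp
    ultimately show ?thesis by blast
  qed
  have "f ` ?VP \<subseteq> ?PP" using fin by blast
  moreover have "?PP \<subseteq> f ` ?VP"
  proof
    fix A assume "A \<in> ?PP"
    then obtain H where "H \<in> ?VP" "f H = A" using fsurj by blast
    then show "A \<in> f ` ?VP" by blast
  qed
  ultimately have fbij: "bij_betw f ?VP ?PP"
    unfolding bij_betw_def using finj by blast
  have fpf: "f (pitchfork ?S H1 H2) = (f H1 - f H2) \<union> (f H2 - f H1)"
    if H1V: "H1 \<in> ?VP" and H2V: "H2 \<in> ?VP" for H1 H2
  proof -
    obtain W1 where W1: "W1 \<subseteq> X'" "W1 \<noteq> {}" "H1 = hp X W1" using hV[OF H1V] by blast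
    obtain W2 where W2: "W2 \<subseteq> X'" "W2 \<noteq> {}" "H2 = hp X W2" using hV[OF H2V] by blast
    have WX: "W1 \<subseteq> X" "W2 \<subseteq> X" using W1 W2 unfolding X'_def by auto
    have "pitchfork ?S H1 H2 = hp X ((W1 - W2) \<union> (W2 - W1))"
      using hp_pitch[OF WX] W1 W2 unfolding desargues_points_def by simp
    moreover have "(W1 - W2) \<union> (W2 - W1) \<subseteq> X'" using W1 W2 by blast
    ultimately have "f (pitchfork ?S H1 H2) = g ` ((W1 - W2) \<union> (W2 - W1))" using fhp by simp
    also have "\<dots> = (g ` W1 - g ` W2) \<union> (g ` W2 - g ` W1)"
    proof -
      have d1: "W1 - W2 \<subseteq> X'" "W2 - W1 \<subseteq> X'" using W1(1) W2(1) by blast+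
      show ?thesis
        using inj_on_image_set_diff[OF ginj d1(1) W2(1)] inj_on_image_set_diff[OF ginj d1(2) W1(1)]
        by (simp add: image_Un)
    qed
    finally show ?thesis using W1 W2 fhp by simp
  qed
  have lines: "(\<lambda>l. f ` l) ` ?VL = ?PL"
  proof (rule set_eqI)
    fix m
    show "m \<in> (\<lambda>l. f ` l) ` ?VL \<longleftrightarrow> m \<in> ?PL"
    proof
      assume "m \<in> (\<lambda>l. f ` l) ` ?VL"
      then obtain H1 H2 where H: "hyperplane ?S ?L H1" "hyperplane ?S ?L H2" "H1 \<noteq> H2"
        "m = f ` {H1, H2, pitchfork ?S H1 H2}" unfolding veldkamp_lines_def by blast
      have HV: "H1 \<in> ?VP" "H2 \<in> ?VP" using H(1,2) unfolding veldkamp_points_def by simp_all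
      have "m = {f H1, f H2, (f H1 - f H2) \<union> (f H2 - f H1)}" using H(4) fpf[OF HV] by simp
      moreover have "f H1 \<in> ?PP" "f H2 \<in> ?PP" using fin HV by auto
      moreover have "f H1 \<noteq> f H2" using finj HV H(3) unfolding inj_on_def by blast
      ultimately show "m \<in> ?PL" unfolding pg_lines_def by blast
    next
      assume "m \<in> ?PL"
      then obtain A B where AB: "A \<in> ?PP" "B \<in> ?PP" "A \<noteq> B" "m = {A, B, (A - B) \<union> (B - A)}"
        unfolding pg_lines_def by blast
      obtain H1 where H1: "H1 \<in> ?VP" "f H1 = A" using fsurj AB(1) by blast
      obtain H2 where H2: "H2 \<in> ?VP" "f H2 = B" using fsurj AB(2) by blast
      have ne: "H1 \<noteq> H2" using H1 H2 AB(3) by blast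
      have hH1: "hyperplane ?S ?L H1" using H1(1) unfolding veldkamp_points_def by simp
      have hH2: "hyperplane ?S ?L H2" using H2(1) unfolding veldkamp_points_def by simp
      have "{H1, H2, pitchfork ?S H1 H2} \<in> ?VL"
        unfolding veldkamp_lines_def using hH1 hH2 ne by blast
      moreover have "f ` {H1, H2, pitchfork ?S H1 H2} = m" using fpf[OF H1(1) H2(1)] H1 H2 AB(4) by simp
      ultimately show "m \<in> (\<lambda>l. f ` l) ` ?VL" by blast
    qed
  qed
  show "isomorphic_incidence ?VP ?VL ?PP ?PL"
    unfolding isomorphic_incidence_def using fbij lines by blast
qed

end
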